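(* Let $d,N,p\in\mathbb{N}$ and let $X_1,\ldots,X_N$ be independent, uniformly distributed random points in $[0,1)^d$, with $X_j=(X_{j,1},\ldots,X_{j,d})$. For $i\in\{1,\ldots,d\}$ and $j\in\{1,\ldots,N\}$ let $X_{j,i}^{(p)}=\lfloor 2^pX_{j,i}\rfloor/2^p\in\{0,1/2^p,\ldots,(2^p-1)/2^p\}$ and $X_j^{(p)}=(X_{j,1}^{(p)},\ldots,X_{j,d}^{(p)})$. Write each $X_{j,i}^{(p)}$ in binary with $p$ digits and concatenate the corresponding $dN$ binary words (in the order $X_{1,1}^{(p)},\ldots,X_{1,d}^{(p)},X_{2,1}^{(p)},\ldots,X_{N,d}^{(p)}$) to obtain a binary word $U_m$ of length $m=pdN$. Let $\mathcal{P}=\{X_1,\ldots,X_N\}$. Then: 1. $\mathcal{P}(U_m)=\{X_1^{(p)},\ldots,X_N^{(p)}\}$; 2. $U_m$ is uniformly distributed in $\{0,1\}^m$; 3. $|D_N^{\ast}(\mathcal{P})-D_N^{\ast}(\mathcal{P}(U_m))|\le d/2^p$; 4. for every $C>0$, $$\mathbb{P}\left[D_N^{\ast}(\mathcal{P}(U_m))\ge C\sqrt{\frac{d}{N}}\right]\le\mathbb{P}\left[D_N^{\ast}(\mathcal{P})\ge C\sqrt{\frac{d}{N}}-\frac{d}{2^p}\right].$$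
   Context: For an $N$-element point set $\mathcal{Q}=\{\boldsymbol{x}_1,\ldots,\boldsymbol{x}_N\}\subset[0,1)^d$, the star-discrepancy is $D_N^{\ast}(\mathcal{Q})=\sup_{\boldsymbol{t}\in[0,1]^d}\left|\frac{\#\{k:\boldsymbol{x}_k\in[\boldsymbol{0},\boldsymbol{t})\}}{N}-\mathrm{volume}([\boldsymbol{0},\boldsymbol{t}))\right|$, where $[\boldsymbol{0},\boldsymbol{t})=[0,t_1)\times\cdots\times[0,t_d)$. Conversion of a binary word of length $m=pdN$ to a point set $\mathcal{P}(\cdot)$: split the word into $dN$ consecutive blocks of $p$ bits; a block $d_1d_2\ldots d_p$ yields the coordinate $\sum_{i=1}^p d_i2^{-i}$; consecutive groups of $d$ such coordinates form the $N$ points of $[0,1)^d$. *)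

theory Defs
  imports "HOL-Probability.Probability"
begin

text \<open>Star-discrepancy of the indexed point family x 0, ..., x (N-1) in [0,1)^d;
  a point is a function nat => real, only coordinates i < d are relevant.\<close>
definition star_disc :: "nat \<Rightarrow> nat \<Rightarrow> (nat \<Rightarrow> nat \<Rightarrow> real) \<Rightarrow> real" where
  "star_disc d N x =
     (SUP t \<in> {t :: nat \<Rightarrow> real. \<forall>i<d. 0 \<le> t i \<and> t i \<le> 1}.
        \<bar>real (card {k. k < N \<and> (\<forall>i<d. x k i < t i)}) / real N - (\<Prod>i<d. t i)\<bar>)"

text \<open>The point set P(w) of a binary word w of length p*d*N (True = digit 1):
  coordinate i of point k is built from block number k*d+i of p bits.\<close>
definition word_to_points :: "nat \<Rightarrow> nat \<Rightarrow> bool list \<Rightarrow> nat \<Rightarrow> nat \<Rightarrow> real" where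
  "word_to_points p d w k i =
     (\<Sum>l<p. (if w ! ((k * d + i) * p + l) then 1 else 0) / 2 ^ (l + 1))"

definition bin_word :: "nat \<Rightarrow> nat \<Rightarrow> bool list" where
  "bin_word p a = map (\<lambda>l. odd (a div 2 ^ (p - 1 - l))) [0..<p]"

definition trunc_p :: "nat \<Rightarrow> real \<Rightarrow> real" where
  "trunc_p p x = real_of_int \<lfloor>2 ^ p * x\<rfloor> / 2 ^ p"

text \<open>The word U_m: concatenation of the p-digit binary words of the truncated
  coordinates in the order X_{1,1},...,X_{1,d},X_{2,1},...,X_{N,d} (0-based here).\<close>
definition word_of_points :: "nat \<Rightarrow> nat \<Rightarrow> nat \<Rightarrow> (nat \<Rightarrow> nat \<Rightarrow> real) \<Rightarrow> bool list" where
  "word_of_points p d N X =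
     concat (map (\<lambda>j. concat (map (\<lambda>i. bin_word p (nat \<lfloor>2 ^ p * X j i\<rfloor>)) [0..<d])) [0..<N])"

text \<open>Probability space of N independent uniform random points in [0,1)^d:
  the random point X_j is the projection omega j.\<close>
definition rand_points :: "nat \<Rightarrow> nat \<Rightarrow> (nat \<Rightarrow> nat \<Rightarrow> real) measure" where
  "rand_points d N =
     PiM {..<N} (\<lambda>_. PiM {..<d} (\<lambda>_. uniform_measure lborel {0..<1::real}))"

end

theory Submission
  imports Defs
begin


lemma concat_eq_uniform:
  "\<forall>x\<in>set xs. length x = L \<Longrightarrow> \<forall>y\<in>set ys. length y = L \<Longrightarrow> length xs = length ys
   \<Longrightarrow> (concat xs = concat ys) = (xs = ys)"
proof (induction xs arbitrary: ys)
  case Nil then show ?case by simp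
next
  case (Cons x xs)
  then obtain y ys' where ys: "ys = y # ys'" by (cases ys) auto
  have "length x = length y" using Cons.prems ys by simp
  then have "(concat (x#xs) = concat ys) = (x = y \<and> concat xs = concat ys')"
    using ys by (simp add: append_eq_append_conv)
  also have "\<dots> = (x = y \<and> xs = ys')" using Cons ys by auto
  finally show ?case using ys by simp
qed

lemma length_concat_uniform:
  "\<forall>j<n. length (f j) = L \<Longrightarrow> length (concat (map f [0..<n])) = n * L"
  by (induction n) auto

lemma nth_concat_uniform:
  "\<forall>j<n. length (f j) = L \<Longrightarrow> j < n \<Longrightarrow> r < L \<Longrightarrow> concat (map f [0..<n]) ! (j*L + r) = f j ! r"
proof (induction n)
  case 0 then show ?case by simp
next
  case (Suc n)
  have len: "length (concat (map f [0..<n])) = n * L"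
    using Suc.prems(1) by (intro length_concat_uniform) auto
  show ?case
  proof (cases "j < n")
    case True
    have "j * L + r < n * L"
    proof -
      have "j * L + r < j * L + L" using Suc.prems by simp
      also have "\<dots> = Suc j * L" by simp
      also have "\<dots> \<le> n * L" using True by (intro mult_right_mono) auto
      finally show ?thesis .
    qed
    then show ?thesis using Suc True len by (simp add: nth_append)
  next
    case False
    then have "j = n" using Suc.prems by simp
    then show ?thesis using len by (simp add: nth_append)
  qed
qed

lemma bits_sum:
  "(\<Sum>l<p. (if odd (a div 2^(p-1-l)) then 1 else 0) / 2^(l+1) :: real) = real (a mod 2^p) / 2^p"
proof (induction p)
  case 0 then show ?case by simp
next
  case (Suc p)
  have "(\<Sum>l<Suc p. (if odd (a div 2^(Suc p-1-l)) then 1 else 0) / 2^(l+1) :: real)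
      = (if odd (a div 2^p) then 1 else 0) / 2 + (\<Sum>l<p. (if odd (a div 2^(p-1-l)) then 1 else 0) / 2^(l+1)) / 2"
    by (subst sum.lessThan_Suc_shift) (simp add: sum_divide_distrib)
  also have "\<dots> = (if odd (a div 2^p) then 1 else 0) / 2 + real (a mod 2^p) / 2^(Suc p)"
    using Suc by simp
  also have "\<dots> = real (a mod 2^(Suc p)) / 2^(Suc p)"
  proof -
    have "a mod (2^p*2) = 2^p * (a div 2^p mod 2) + a mod 2^p"
      by (rule mod_mult2_eq)
    then have "a mod 2^(Suc p) = 2^p * (a div 2^p mod 2) + a mod 2^p"
      by (simp only: power_Suc2)
    moreover have "real (a div 2^p mod 2) = (if odd (a div 2^p) then 1 else 0)"
      by (simp add: odd_iff_mod_2_eq_one)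
    ultimately show ?thesis by (simp add: field_simps)
  qed
  finally show ?case .
qed

lemma bin_word_nth: "l < p \<Longrightarrow> bin_word p a ! l = odd (a div 2^(p-1-l))"
  by (simp add: bin_word_def)

lemma length_bin_word[simp]: "length (bin_word p a) = p"
  by (simp add: bin_word_def)

lemma bin_word_val:
  "(\<Sum>l<p. (if bin_word p a ! l then 1 else 0) / 2^(l+1) :: real) = real (a mod 2^p) / 2^p"
proof -
  have "(\<Sum>l<p. (if bin_word p a ! l then 1 else 0) / 2^(l+1) :: real)
     = (\<Sum>l<p. (if odd (a div 2^(p-1-l)) then 1 else 0) / 2^(l+1))"
    by (rule sum.cong) (auto simp: bin_word_nth)
  then show ?thesis by (simp only: bits_sum)
qed

lemma bin_word_inj:
  assumes "a < 2^p" "b < 2^p" "bin_word p a = bin_word p b" shows "a = b"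
proof -
  have "real (a mod 2^p) / 2^p = real (b mod 2^p) / 2^p"
    using bin_word_val[of p a] bin_word_val[of p b] assms(3) by simp
  then show ?thesis using assms by simp
qed



definition cube :: "nat \<Rightarrow> (nat \<Rightarrow> real) set" where
  "cube d = {t. \<forall>i<d. 0 \<le> t i \<and> t i \<le> 1}"
definition cnt :: "nat \<Rightarrow> nat \<Rightarrow> (nat \<Rightarrow> nat \<Rightarrow> real) \<Rightarrow> (nat \<Rightarrow> real) \<Rightarrow> nat" where
  "cnt d N x t = card {k. k < N \<and> (\<forall>i<d. x k i < t i)}"
definition fd :: "nat \<Rightarrow> nat \<Rightarrow> (nat \<Rightarrow> nat \<Rightarrow> real) \<Rightarrow> (nat \<Rightarrow> real) \<Rightarrow> real" where
  "fd d N x t = \<bar>real (cnt d N x t) / real N - (\<Prod>i<d. t i)\<bar>"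

lemma star_disc_alt: "star_disc d N x = (SUP t \<in> cube d. fd d N x t)"
  by (simp add: star_disc_def cube_def fd_def cnt_def)

lemma cnt_le: "cnt d N x t \<le> N"
proof -
  have "cnt d N x t \<le> card {..<N}" unfolding cnt_def by (rule card_mono) auto
  then show ?thesis by simp
qed

lemma cnt_mono:
  assumes "\<And>k. k < N \<Longrightarrow> (\<forall>i<d. x k i < t i) \<Longrightarrow> (\<forall>i<d. y k i < s i)"
  shows "cnt d N x t \<le> cnt d N y s"
  unfolding cnt_def by (rule card_mono) (use assms in auto)

lemma prod_cube: "t \<in> cube d \<Longrightarrow> 0 \<le> (\<Prod>i<d. t i) \<and> (\<Prod>i<d. t i) \<le> 1"
  unfolding cube_def by (auto intro!: prod_nonneg prod_le_1)

lemma fd_le1: assumes "N \<ge> 1" "t \<in> cube d" shows "fd d N x t \<le> 1"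
proof -
  have "real (cnt d N x t) \<le> real N" using cnt_le by simp
  then have "real (cnt d N x t) / real N \<le> 1" "0 \<le> real (cnt d N x t) / real N"
    using assms by (auto simp: divide_le_eq_1)
  then show ?thesis using prod_cube[OF assms(2)] unfolding fd_def by linarith
qed

lemma cube_ne: "(\<lambda>_. 0) \<in> cube d" by (simp add: cube_def)

lemma bdd_fd: "N \<ge> 1 \<Longrightarrow> bdd_above (fd d N x ` cube d)"
  using fd_le1 by (auto intro!: bdd_aboveI[of _ 1])

lemma le_sd: "N \<ge> 1 \<Longrightarrow> t \<in> cube d \<Longrightarrow> fd d N x t \<le> star_disc d N x"
  unfolding star_disc_alt by (rule cSUP_upper) (auto intro: bdd_fd)

lemma sd_le: "(\<And>t. t \<in> cube d \<Longrightarrow> fd d N x t \<le> B) \<Longrightarrow> star_disc d N x \<le> B"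
  unfolding star_disc_alt by (rule cSUP_least) (use cube_ne in auto)

lemma prod_lip:
  fixes a b :: "nat \<Rightarrow> real"
  assumes "finite I" "\<And>i. i \<in> I \<Longrightarrow> 0 \<le> a i \<and> a i \<le> 1 \<and> 0 \<le> b i \<and> b i \<le> 1"
  shows "\<bar>(\<Prod>i\<in>I. a i) - (\<Prod>i\<in>I. b i)\<bar> \<le> (\<Sum>i\<in>I. \<bar>a i - b i\<bar>)"
  using assms
proof (induction I rule: finite_induct)
  case empty then show ?case by simp
next
  case (insert j I)
  define A where "A = (\<Prod>i\<in>I. a i)"
  define B where "B = (\<Prod>i\<in>I. b i)"
  have A: "0 \<le> A" "A \<le> 1" unfolding A_def using insert by (auto intro!: prod_nonneg prod_le_1)
  have B: "0 \<le> B" "B \<le> 1" unfolding B_def using insert by (auto intro!: prod_nonneg prod_le_1)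
  have j: "0 \<le> a j" "a j \<le> 1" "0 \<le> b j" "b j \<le> 1" using insert by auto
  have IH: "\<bar>A - B\<bar> \<le> (\<Sum>i\<in>I. \<bar>a i - b i\<bar>)" using insert unfolding A_def B_def by auto
  have "a j * A - b j * B = (a j - b j) * A + b j * (A - B)" by (simp add: algebra_simps)
  then have "\<bar>a j * A - b j * B\<bar> \<le> \<bar>(a j - b j) * A\<bar> + \<bar>b j * (A - B)\<bar>"
    by (metis abs_triangle_ineq)
  also have "\<dots> = \<bar>a j - b j\<bar> * A + b j * \<bar>A - B\<bar>"
    using A j by (simp add: abs_mult)
  also have "\<dots> \<le> \<bar>a j - b j\<bar> + \<bar>A - B\<bar>"
    using A j by (intro add_mono mult_left_le mult_left_le_one_le) auto
  finally show ?case using insert IH unfolding A_def B_def by simp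
qed

lemma prod_lip_d:
  assumes "s \<in> cube d" "t \<in> cube d" "\<And>i. i < d \<Longrightarrow> \<bar>s i - t i\<bar> \<le> e"
  shows "\<bar>(\<Prod>i<d. s i) - (\<Prod>i<d. t i)\<bar> \<le> real d * e"
proof -
  have "\<bar>(\<Prod>i<d. s i) - (\<Prod>i<d. t i)\<bar> \<le> (\<Sum>i<d. \<bar>s i - t i\<bar>)"
    using assms by (intro prod_lip) (auto simp: cube_def)
  also have "\<dots> \<le> (\<Sum>i<d. e)" using assms by (intro sum_mono) auto
  finally show ?thesis by simp
qed

lemma disc_perturb:
  fixes x y :: "nat \<Rightarrow> nat \<Rightarrow> real"
  assumes N: "N \<ge> 1" and e: "e > 0"
    and xy: "\<And>k i. k < N \<Longrightarrow> i < d \<Longrightarrow> 0 \<le> y k i \<and> y k i \<le> x k i \<and> x k i < y k i + e \<and> x k i < 1"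
  shows "\<bar>star_disc d N x - star_disc d N y\<bar> \<le> real d * e"
proof -
  have Npos: "real N > 0" using N by simp
  have A: "fd d N y t \<le> star_disc d N x + real d * e" if t: "t \<in> cube d" for t
  proof -
    define t' where "t' = (\<lambda>i. min 1 (t i + e))"
    have t': "t' \<in> cube d" using t e unfolding cube_def t'_def by auto
    have c1: "cnt d N y t \<le> cnt d N x t'"
      by (rule cnt_mono) (use xy in \<open>force simp: t'_def\<close>)
    have c2: "cnt d N x t \<le> cnt d N y t"
      by (rule cnt_mono) (use xy in \<open>fastforce\<close>)
    have v: "\<bar>(\<Prod>i<d. t' i) - (\<Prod>i<d. t i)\<bar> \<le> real d * e"
      by (rule prod_lip_d[OF t' t]) (use t e in \<open>auto simp: t'_def cube_def\<close>)
    have "real (cnt d N y t) / real N \<le> real (cnt d N x t') / real N"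
      using c1 Npos by (simp add: divide_right_mono)
    moreover have "real (cnt d N x t) / real N \<le> real (cnt d N y t) / real N"
      using c2 Npos by (simp add: divide_right_mono)
    moreover have "fd d N x t' \<le> star_disc d N x" "fd d N x t \<le> star_disc d N x"
      using le_sd[OF N] t t' by auto
    moreover have "0 \<le> real d * e" using e by simp
    ultimately show ?thesis using v unfolding fd_def abs_le_iff by linarith
  qed
  have B: "fd d N x t \<le> star_disc d N y + real d * e" if t: "t \<in> cube d" for t
  proof -
    define s where "s = (\<lambda>i. max 0 (t i - e))"
    have s: "s \<in> cube d" using t e unfolding cube_def s_def by auto
    have c1: "cnt d N y s \<le> cnt d N x t"
    proof (rule cnt_mono)
      fix k assume k: "k < N" and h: "\<forall>i<d. y k i < s i"
      show "\<forall>i<d. x k i < t i"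
      proof (intro allI impI)
        fix i assume i: "i < d"
        have "y k i < s i" using h i by auto
        moreover have "0 \<le> y k i" "x k i < y k i + e" using xy[OF k i] by auto
        ultimately show "x k i < t i" unfolding s_def by linarith
      qed
    qed
    have c2: "cnt d N x t \<le> cnt d N y t"
      by (rule cnt_mono) (use xy in \<open>fastforce\<close>)
    have v: "\<bar>(\<Prod>i<d. t i) - (\<Prod>i<d. s i)\<bar> \<le> real d * e"
      by (rule prod_lip_d[OF t s]) (use t e in \<open>auto simp: s_def cube_def\<close>)
    have "real (cnt d N y s) / real N \<le> real (cnt d N x t) / real N"
      using c1 Npos by (simp add: divide_right_mono)
    moreover have "real (cnt d N x t) / real N \<le> real (cnt d N y t) / real N"
      using c2 Npos by (simp add: divide_right_mono)
    moreover have "fd d N y s \<le> star_disc d N y" "fd d N y t \<le> star_disc d N y"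
      using le_sd[OF N] t s by auto
    moreover have "0 \<le> real d * e" using e by simp
    ultimately show ?thesis using v unfolding fd_def abs_le_iff by linarith
  qed
  have "star_disc d N y \<le> star_disc d N x + real d * e" using A by (rule sd_le)
  moreover have "star_disc d N x \<le> star_disc d N y + real d * e" using B by (rule sd_le)
  ultimately show ?thesis by linarith
qed



abbreviation "Qu \<equiv> uniform_measure lborel {0..<1::real}"

lemma Qu_prob: "prob_space Qu"
  by (rule prob_space_uniform_measure) auto

lemma sets_Qu[measurable_cong, simp]: "sets Qu = sets borel"
  by simp

lemma space_Qu[simp]: "space Qu = UNIV"
  by simp

lemma Md_prob: "prob_space (PiM {..<d} (\<lambda>_. Qu))"
  by (rule prob_space_PiM) (rule Qu_prob)

lemma M_prob: "prob_space (rand_points d N)"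
  unfolding rand_points_def by (rule prob_space_PiM) (rule Md_prob)

lemma meas_comp[measurable]: "k < N \<Longrightarrow> i < d \<Longrightarrow> (\<lambda>\<omega>. \<omega> k i) \<in> borel_measurable (rand_points d N)"
proof -
  assume k: "k < N" and i: "i < d"
  have e: "measurable (rand_points d N) borel = measurable (PiM {..<N} (\<lambda>_. PiM {..<d} (\<lambda>_. borel))) (borel::real measure)"
    unfolding rand_points_def by (intro measurable_cong_sets sets_PiM_cong) auto
  have "(\<lambda>\<omega>. \<omega> k) \<in> measurable (PiM {..<N} (\<lambda>_. PiM {..<d} (\<lambda>_. borel))) (PiM {..<d} (\<lambda>_. borel::real measure))"
    using k by (intro measurable_component_singleton) auto
  moreover have "(\<lambda>y. y i) \<in> measurable (PiM {..<d} (\<lambda>_. borel::real measure)) borel"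
    using i by (intro measurable_component_singleton) auto
  ultimately show ?thesis unfolding e by (rule measurable_compose)
qed

lemma pred_bw: "k < N \<Longrightarrow> i < d \<Longrightarrow> Measurable.pred (rand_points d N) (\<lambda>\<omega>. bin_word p (nat \<lfloor>2^p * \<omega> k i\<rfloor>) = v)"
  by measurable

lemma AE_good: "AE \<omega> in rand_points d N. \<forall>k<N. \<forall>i<d. 0 \<le> \<omega> k i \<and> \<omega> k i < 1"
proof -
  have q: "AE x in Qu. 0 \<le> x \<and> x < 1"
    by (rule AE_uniform_measureI) auto
  have "AE y in PiM {..<d} (\<lambda>_. Qu). 0 \<le> y i \<and> y i < 1" if "i < d" for i
    using that q by (intro AE_PiM_component[where P = "\<lambda>x. 0 \<le> x \<and> x < 1"] Qu_prob) auto
  then have "AE y in PiM {..<d} (\<lambda>_. Qu). \<forall>i\<in>{..<d}. 0 \<le> y i \<and> y i < 1"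
    by (intro AE_finite_allI) auto
  then have md: "AE y in PiM {..<d} (\<lambda>_. Qu). \<forall>i<d. 0 \<le> y i \<and> y i < 1"
    by (rule eventually_mono) auto
  have "AE \<omega> in rand_points d N. \<forall>i<d. 0 \<le> \<omega> k i \<and> \<omega> k i < 1" if "k < N" for k
    unfolding rand_points_def using that md
    by (intro AE_PiM_component[where P = "\<lambda>y. \<forall>i<d. 0 \<le> y i \<and> y i < 1"] Md_prob) auto
  then have "AE \<omega> in rand_points d N. \<forall>k\<in>{..<N}. \<forall>i<d. 0 \<le> \<omega> k i \<and> \<omega> k i < 1"
    by (intro AE_finite_allI) auto
  then show ?thesis by (rule eventually_mono) auto
qed



definition Wd :: "nat \<Rightarrow> nat \<Rightarrow> nat \<Rightarrow> (nat \<Rightarrow> nat \<Rightarrow> nat) \<Rightarrow> bool list" where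
  "Wd p d N a = concat (map (\<lambda>j. concat (map (\<lambda>i. bin_word p (a j i)) [0..<d])) [0..<N])"

lemma U_Wd: "word_of_points p d N \<omega> = Wd p d N (\<lambda>j i. nat \<lfloor>2^p * \<omega> j i\<rfloor>)"
  by (simp add: word_of_points_def Wd_def)

lemma length_inner: "length (concat (map (\<lambda>i. bin_word p (a j i)) [0..<d])) = d * p"
  by (rule length_concat_uniform) simp

lemma length_Wd: "length (Wd p d N a) = p * d * N"
  unfolding Wd_def by (subst length_concat_uniform[where L = "d*p"]) (auto simp: length_inner)

lemma Wd_eq: "(Wd p d N a = Wd p d N b) = (\<forall>k<N. \<forall>i<d. bin_word p (a k i) = bin_word p (b k i))"
proof -
  have "(Wd p d N a = Wd p d N b) =
     (map (\<lambda>j. concat (map (\<lambda>i. bin_word p (a j i)) [0..<d])) [0..<N]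
      = map (\<lambda>j. concat (map (\<lambda>i. bin_word p (b j i)) [0..<d])) [0..<N])"
    unfolding Wd_def by (rule concat_eq_uniform[where L = "d*p"]) (auto simp: length_inner)
  also have "\<dots> = (\<forall>k<N. concat (map (\<lambda>i. bin_word p (a k i)) [0..<d])
                     = concat (map (\<lambda>i. bin_word p (b k i)) [0..<d]))"
    by (auto simp: map_eq_conv)
  also have "\<dots> = (\<forall>k<N. map (\<lambda>i. bin_word p (a k i)) [0..<d] = map (\<lambda>i. bin_word p (b k i)) [0..<d])"
    by (intro all_cong imp_cong refl concat_eq_uniform[where L = p]) auto
  also have "\<dots> = (\<forall>k<N. \<forall>i<d. bin_word p (a k i) = bin_word p (b k i))"
    by (auto simp: map_eq_conv)
  finally show ?thesis .
qed

definition Pset :: "nat \<Rightarrow> nat \<Rightarrow> nat \<Rightarrow> (nat \<Rightarrow> nat \<Rightarrow> nat) set" where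
  "Pset p d N = PiE {..<N} (\<lambda>_. PiE {..<d} (\<lambda>_. {..<2^p}))"

lemma Wd_inj: "inj_on (Wd p d N) (Pset p d N)"
proof (rule inj_onI)
  fix a b assume a: "a \<in> Pset p d N" and b: "b \<in> Pset p d N" and e: "Wd p d N a = Wd p d N b"
  have "a k i = b k i" if "k < N" "i < d" for k i
  proof (rule bin_word_inj)
    show "a k i < 2^p" "b k i < 2^p" using a b that by (auto simp: Pset_def PiE_iff)
    show "bin_word p (a k i) = bin_word p (b k i)" using e that by (simp add: Wd_eq)
  qed
  note ab = this
  show "a = b"
  proof (rule PiE_ext[OF a[unfolded Pset_def] b[unfolded Pset_def]])
    fix k assume k: "k \<in> {..<N}"
    have ak: "a k \<in> PiE {..<d} (\<lambda>_. {..<2^p})" "b k \<in> PiE {..<d} (\<lambda>_. {..<2^p})"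
      using a b k by (auto simp: Pset_def)
    show "a k = b k" by (rule PiE_ext[OF ak]) (use k ab in auto)
  qed
qed

lemma card_Pset: "card (Pset p d N) = 2^(p*d*N)"
  unfolding Pset_def by (simp add: card_PiE power_mult[symmetric] ac_simps)

lemma card_S: "card {w :: bool list. length w = n} = 2^n"
  using card_lists_length_eq[of "UNIV :: bool set" n] by simp

lemma finite_S: "finite {w :: bool list. length w = n}"
  using finite_lists_length_eq[of "UNIV :: bool set" n] by simp

lemma Wd_image: "Wd p d N ` Pset p d N = {w. length w = p*d*N}"
proof (rule card_subset_eq)
  show "finite {w :: bool list. length w = p*d*N}" by (rule finite_S)
  show "Wd p d N ` Pset p d N \<subseteq> {w. length w = p * d * N}" by (auto simp: length_Wd)
  show "card (Wd p d N ` Pset p d N) = card {w :: bool list. length w = p * d * N}"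
    using card_image[OF Wd_inj] by (simp add: card_Pset card_S)
qed



lemma floor_J:
  assumes "0 \<le> x" "x < 1" "a < 2^p"
  shows "(bin_word p (nat \<lfloor>2^p*x\<rfloor>) = bin_word p a) = (real a / 2^p \<le> x \<and> x < (real a + 1) / 2^p)"
proof -
  have fl0: "0 \<le> \<lfloor>2^p*x\<rfloor>" using assms by simp
  have "2^p * x < 2^p" using assms by simp
  then have "\<lfloor>2^p*x\<rfloor> < 2^p" by (simp add: floor_less_iff)
  then have lt: "nat \<lfloor>2^p*x\<rfloor> < 2^p" using fl0
    by (metis nat_less_iff of_nat_numeral of_nat_power)
  have "(bin_word p (nat \<lfloor>2^p*x\<rfloor>) = bin_word p a) = (nat \<lfloor>2^p*x\<rfloor> = a)"
    using bin_word_inj[OF lt assms(3)] by auto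
  also have "\<dots> = (\<lfloor>2^p*x\<rfloor> = int a)" using fl0 by auto
  also have "\<dots> = (real a \<le> 2^p*x \<and> 2^p*x < real a + 1)"
    by (simp add: floor_eq_iff)
  also have "\<dots> = (real a / 2^p \<le> x \<and> x < (real a + 1) / 2^p)"
    by (simp add: pos_divide_le_eq pos_less_divide_eq mult.commute)
  finally show ?thesis .
qed

declare pred_bw[measurable]

lemma space_M: "space (rand_points d N) = PiE {..<N} (\<lambda>_. PiE {..<d} (\<lambda>_. UNIV))"
  by (simp add: rand_points_def space_PiM)

lemma pre_sets:
  "word_of_points p d N -` {Wd p d N c} \<inter> space (rand_points d N) \<in> sets (rand_points d N)"
proof -
  have "word_of_points p d N -` {Wd p d N c} \<inter> space (rand_points d N)
     = {\<omega> \<in> space (rand_points d N). \<forall>k<N. \<forall>i<d. bin_word p (nat \<lfloor>2^p * \<omega> k i\<rfloor>) = bin_word p (c k i)}"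
    by (auto simp: U_Wd Wd_eq)
  also have "\<dots> \<in> sets (rand_points d N)" by measurable
  finally show ?thesis .
qed



lemma emeasure_J:
  assumes "a < (2::nat)^p"
  shows "emeasure Qu {real a / 2^p ..< (real a + 1) / 2^p} = ennreal (1 / 2^p)"
proof -
  have le1: "(real a + 1) / 2^p \<le> 1"
  proof -
    have "real a + 1 \<le> 2^p" using assms
      by (metis Suc_leI of_nat_Suc of_nat_le_iff of_nat_numeral of_nat_power add.commute)
    then show ?thesis by simp
  qed
  have sub: "{0..<1} \<inter> {real a / 2^p ..< (real a + 1) / 2^p} = {real a / 2^p ..< (real a + 1) / 2^p}"
    using le1 by auto
  have "emeasure Qu {real a / 2^p ..< (real a + 1) / 2^p}
      = emeasure lborel {real a / 2^p ..< (real a + 1) / 2^p} / emeasure lborel {0..<1::real}"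
    using le1 by (subst emeasure_uniform_measure) (auto simp: min_def)
  also have "\<dots> = ennreal ((real a + 1) / 2^p - real a / 2^p)"
    using emeasure_lborel_Ico[of "real a / 2^p" "(real a + 1) / 2^p"]
    by (simp add: divide_ennreal_def divide_right_mono)
  also have "(real a + 1) / 2^p - real a / 2^p = 1 / 2^p"
    by (simp add: field_simps)
  finally show ?thesis .
qed

lemma psf_Qu: "product_sigma_finite (\<lambda>_. Qu)"
  unfolding product_sigma_finite_def using prob_space_imp_sigma_finite[OF Qu_prob] by simp

lemma psf_Md: "product_sigma_finite (\<lambda>_. PiM {..<d} (\<lambda>_. Qu))"
  unfolding product_sigma_finite_def using prob_space_imp_sigma_finite[OF Md_prob] by simp

lemma pre_measure:
  assumes c: "c \<in> Pset p d N"
  shows "emeasure (rand_points d N) (word_of_points p d N -` {Wd p d N c} \<inter> space (rand_points d N))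
         = ennreal (1 / 2^(p*d*N))"
proof -
  let ?M = "rand_points d N"
  let ?Md = "PiM {..<d} (\<lambda>_. Qu)"
  define J where "J = (\<lambda>k i. {real (c k i) / 2^p ..< (real (c k i) + 1) / 2^p})"
  define B where "B = PiE {..<N} (\<lambda>k. PiE {..<d} (\<lambda>i. J k i))"
  have cb: "c k i < 2^p" if "k < N" "i < d" for k i
    using c that by (auto simp: Pset_def PiE_iff)
  have Bs: "B \<in> sets ?M"
    unfolding B_def rand_points_def J_def by (intro sets_PiM_I_finite) auto
  have AE: "AE \<omega> in ?M. (\<omega> \<in> word_of_points p d N -` {Wd p d N c} \<inter> space ?M) = (\<omega> \<in> B)"
    using AE_good[where d=d and N=N] AE_space
  proof (eventually_elim)
    case (elim \<omega>)
    have sp: "\<omega> \<in> PiE {..<N} (\<lambda>_. PiE {..<d} (\<lambda>_. UNIV))" using elim space_M by metis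
    have "(\<omega> \<in> word_of_points p d N -` {Wd p d N c} \<inter> space ?M)
        = (\<forall>k<N. \<forall>i<d. bin_word p (nat \<lfloor>2^p * \<omega> k i\<rfloor>) = bin_word p (c k i))"
      using elim by (auto simp: U_Wd Wd_eq)
    also have "\<dots> = (\<forall>k<N. \<forall>i<d. \<omega> k i \<in> J k i)"
      using elim cb by (auto simp: floor_J J_def)
    also have "\<dots> = (\<omega> \<in> B)"
      using sp unfolding B_def by (auto simp: PiE_iff)
    finally show ?case .
  qed
  have "emeasure ?M (word_of_points p d N -` {Wd p d N c} \<inter> space ?M) = emeasure ?M B"
    by (rule emeasure_eq_AE[OF AE pre_sets Bs])
  also have "\<dots> = (\<Prod>k<N. emeasure ?Md (PiE {..<d} (\<lambda>i. J k i)))"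
    unfolding B_def rand_points_def J_def
    by (rule product_sigma_finite.emeasure_PiM[OF psf_Md]) (auto intro!: sets_PiM_I_finite)
  also have "\<dots> = (\<Prod>k<N. \<Prod>i<d. emeasure Qu (J k i))"
    unfolding J_def
    by (intro prod.cong refl product_sigma_finite.emeasure_PiM[OF psf_Qu]) auto
  also have "\<dots> = (\<Prod>k<N. \<Prod>i<d. ennreal (1 / 2^p))"
    unfolding J_def by (intro prod.cong refl emeasure_J cb) auto
  also have "\<dots> = ennreal (((1 / 2^p)^d)^N)"
    by (simp add: prod_ennreal power_mult[symmetric] ennreal_power)
  also have "((1 / 2^p)^d)^N = (1 / 2^(p*d*N) :: real)"
    by (simp add: power_mult[symmetric] power_one_over)
  finally show ?thesis .
qed



definition rq :: "nat \<Rightarrow> rat list \<Rightarrow> nat \<Rightarrow> real" where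
  "rq d q i = (if i < d \<and> i < length q then max 0 (min 1 (real_of_rat (q ! i))) else 0)"

lemma rq_cube: "rq d q \<in> cube d"
  by (simp add: rq_def cube_def)

lemma approx_rat:
  assumes N: "N \<ge> 1" and t: "t \<in> cube d" and e: "e > 0"
  shows "\<exists>q. fd d N x t - e \<le> fd d N x (rq d q)"
proof -
  define \<eta> where "\<eta> = e / (real d + 1)"
  have \<eta>: "\<eta> > 0" using e by (simp add: \<eta>_def)
  have de: "real d * \<eta> \<le> e"
  proof -
    have "real d * \<eta> = e * (real d / (real d + 1))" by (simp add: \<eta>_def)
    also have "\<dots> \<le> e * 1" using e by (intro mult_left_mono) auto
    finally show ?thesis by simp
  qed
  have Npos: "real N > 0" using N by simp
  have t01: "0 \<le> t i" "t i \<le> 1" if "i < d" for i using t that by (auto simp: cube_def)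
  show ?thesis
  proof (cases "real (cnt d N x t) / real N - (\<Prod>i<d. t i) \<ge> 0")
    case True
    have "\<forall>i. \<exists>r::rat. t i < of_rat r \<and> of_rat r < t i + \<eta>"
      using \<eta> by (intro allI of_rat_dense) simp
    then obtain g where g: "\<And>i. t i < of_rat (g i) \<and> of_rat (g i) < t i + \<eta>" by metis
    define q where "q = map g [0..<d]"
    have rqi: "t i \<le> rq d q i \<and> rq d q i \<le> t i + \<eta>" if "i < d" for i
      using g[of i] t01[OF that] \<eta> that by (auto simp: rq_def q_def)
    have c: "cnt d N x t \<le> cnt d N x (rq d q)"
      by (rule cnt_mono) (use rqi in \<open>fastforce\<close>)
    have v: "\<bar>(\<Prod>i<d. rq d q i) - (\<Prod>i<d. t i)\<bar> \<le> real d * \<eta>"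
      by (rule prod_lip_d[OF rq_cube t]) (use rqi in \<open>force\<close>)
    have "real (cnt d N x t) / real N \<le> real (cnt d N x (rq d q)) / real N"
      using c Npos by (simp add: divide_right_mono)
    then have "fd d N x t - e \<le> fd d N x (rq d q)"
      using True v de unfolding fd_def abs_le_iff by linarith
    then show ?thesis by blast
  next
    case False
    have "\<forall>i. \<exists>r::rat. t i - \<eta> < of_rat r \<and> of_rat r < t i"
      using \<eta> by (intro allI of_rat_dense) simp
    then obtain g where g: "\<And>i. t i - \<eta> < of_rat (g i) \<and> of_rat (g i) < t i" by metis
    define q where "q = map g [0..<d]"
    have rqi: "t i - \<eta> \<le> rq d q i \<and> rq d q i \<le> t i" if "i < d" for i
      using g[of i] t01[OF that] \<eta> that by (auto simp: rq_def q_def)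
    have c: "cnt d N x (rq d q) \<le> cnt d N x t"
      by (rule cnt_mono) (use rqi in \<open>fastforce\<close>)
    have v: "\<bar>(\<Prod>i<d. rq d q i) - (\<Prod>i<d. t i)\<bar> \<le> real d * \<eta>"
      by (rule prod_lip_d[OF rq_cube t]) (use rqi in \<open>force\<close>)
    have "real (cnt d N x (rq d q)) / real N \<le> real (cnt d N x t) / real N"
      using c Npos by (simp add: divide_right_mono)
    then have "fd d N x t - e \<le> fd d N x (rq d q)"
      using False v de unfolding fd_def abs_le_iff by linarith
    then show ?thesis by blast
  qed
qed

lemma sd_countable:
  assumes N: "N \<ge> 1"
  shows "star_disc d N x = (SUP q\<in>(UNIV::rat list set). fd d N x (rq d q))"
proof (rule antisym)
  have bdd: "bdd_above ((\<lambda>q. fd d N x (rq d q)) ` UNIV)"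
    using fd_le1[OF N rq_cube] by (auto intro!: bdd_aboveI[of _ 1])
  show "star_disc d N x \<le> (SUP q\<in>(UNIV::rat list set). fd d N x (rq d q))"
  proof (rule sd_le)
    fix t assume t: "t \<in> cube d"
    show "fd d N x t \<le> (SUP q\<in>(UNIV::rat list set). fd d N x (rq d q))"
    proof (rule field_le_epsilon)
      fix e :: real assume e: "0 < e"
      obtain q where q: "fd d N x t - e \<le> fd d N x (rq d q)" using approx_rat[OF N t e] by blast
      also have "\<dots> \<le> (SUP q\<in>(UNIV::rat list set). fd d N x (rq d q))"
        by (rule cSUP_upper[OF _ bdd]) simp
      finally show "fd d N x t \<le> (SUP q\<in>(UNIV::rat list set). fd d N x (rq d q)) + e" by simp
    qed
  qed
  show "(SUP q\<in>(UNIV::rat list set). fd d N x (rq d q)) \<le> star_disc d N x"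
    by (rule cSUP_least) (auto intro: le_sd[OF N rq_cube])
qed

lemma card_sum: "real (card {k. k < (N::nat) \<and> P k}) = (\<Sum>k<N. if P k then 1 else 0)"
proof -
  have "{k. k < N \<and> P k} = {k \<in> {..<N}. P k}" by auto
  then have "real (card {k. k < N \<and> P k}) = (\<Sum>k\<in>{k \<in> {..<N}. P k}. 1)" by simp
  also have "\<dots> = (\<Sum>k<N. if P k then 1 else 0)" by (rule sum.inter_filter) simp
  finally show ?thesis .
qed

lemma fd_meas: "(\<lambda>\<omega>. fd d N \<omega> s) \<in> borel_measurable (rand_points d N)"
proof -
  have "(\<lambda>\<omega>. fd d N \<omega> s) = (\<lambda>\<omega>. \<bar>(\<Sum>k<N. if (\<forall>i<d. \<omega> k i < s i) then 1 else 0) / real N - (\<Prod>i<d. s i)\<bar>)"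
    by (simp add: fd_def cnt_def card_sum)
  also have "\<dots> \<in> borel_measurable (rand_points d N)" by measurable
  finally show ?thesis .
qed

lemma sd_meas: "N \<ge> 1 \<Longrightarrow> star_disc d N \<in> borel_measurable (rand_points d N)"
proof -
  assume N: "N \<ge> 1"
  have "star_disc d N = (\<lambda>\<omega>. SUP q\<in>(UNIV::rat list set). fd d N \<omega> (rq d q))"
    using sd_countable[OF N] by auto
  also have "\<dots> \<in> borel_measurable (rand_points d N)"
    by (rule borel_measurable_cSUP) (auto intro: fd_meas bdd_aboveI[of _ 1] fd_le1[OF N rq_cube])
  finally show ?thesis .
qed



lemma U_nth:
  assumes "k < N" "i < d" "l < p"
  shows "word_of_points p d N \<omega> ! ((k*d+i)*p + l) = bin_word p (nat \<lfloor>2^p * \<omega> k i\<rfloor>) ! l"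
proof -
  have idx: "(k*d+i)*p + l = k*(d*p) + (i*p + l)" by (simp add: algebra_simps)
  have ilt: "i*p + l < d*p"
  proof -
    have "i*p + l < i*p + p" using assms by simp
    also have "\<dots> = Suc i * p" by simp
    also have "\<dots> \<le> d * p" using assms by (intro mult_right_mono) auto
    finally show ?thesis .
  qed
  have len: "\<forall>j<N. length (concat (map (\<lambda>i. bin_word p (nat \<lfloor>2^p * \<omega> j i\<rfloor>)) [0..<d])) = d*p"
    by (auto intro: length_concat_uniform)
  show ?thesis
    unfolding word_of_points_def idx
    by (subst nth_concat_uniform[OF len]) (use assms ilt in \<open>auto simp: nth_concat_uniform\<close>)
qed

lemma wtp:
  assumes "0 \<le> \<omega> k i" "\<omega> k i < 1" "k < N" "i < d"
  shows "word_to_points p d (word_of_points p d N \<omega>) k i = trunc_p p (\<omega> k i)"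
proof -
  define a where "a = nat \<lfloor>2^p * \<omega> k i\<rfloor>"
  have fl0: "0 \<le> \<lfloor>2^p * \<omega> k i\<rfloor>" using assms by simp
  have "2^p * \<omega> k i < 2^p" using assms by simp
  then have "\<lfloor>2^p * \<omega> k i\<rfloor> < 2^p" by (simp add: floor_less_iff)
  then have alt: "a < 2^p" using fl0 unfolding a_def
    by (metis nat_less_iff of_nat_numeral of_nat_power)
  have "word_to_points p d (word_of_points p d N \<omega>) k i
      = (\<Sum>l<p. (if bin_word p a ! l then 1 else 0) / 2 ^ (l + 1))"
    unfolding word_to_points_def a_def using assms by (intro sum.cong refl) (simp add: U_nth)
  also have "\<dots> = real (a mod 2^p) / 2^p" by (rule bin_word_val)
  also have "\<dots> = real a / 2^p" using alt by simp
  also have "\<dots> = trunc_p p (\<omega> k i)" unfolding a_def trunc_p_def using fl0 by simp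
  finally show ?thesis .
qed

lemma trunc_bounds:
  assumes "0 \<le> x"
  shows "0 \<le> trunc_p p x \<and> trunc_p p x \<le> x \<and> x < trunc_p p x + 1 / 2^p"
proof -
  have a: "real_of_int \<lfloor>2^p * x\<rfloor> \<le> 2^p * x" "2^p * x < real_of_int \<lfloor>2^p * x\<rfloor> + 1"
    by linarith+
  have "0 \<le> \<lfloor>2^p * x\<rfloor>" using assms by simp
  then show ?thesis using a unfolding trunc_p_def
    by (auto simp: field_simps)
qed

theorem lemma1:
  fixes d N p :: nat
  assumes "d \<ge> 1" and "N \<ge> 1" and "p \<ge> 1"
  defines "M \<equiv> rand_points d N"
    and "m \<equiv> p * d * N"
    and "U \<equiv> (\<lambda>\<omega>. word_of_points p d N \<omega>)"
  shows "(AE \<omega> in M. \<forall>k<N. \<forall>i<d. word_to_points p d (U \<omega>) k i = trunc_p p (\<omega> k i))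
       \<and> distr M (uniform_count_measure {w :: bool list. length w = m}) U
           = uniform_count_measure {w :: bool list. length w = m}
       \<and> (AE \<omega> in M. \<bar>star_disc d N \<omega> - star_disc d N (word_to_points p d (U \<omega>))\<bar> \<le> real d / 2 ^ p)
       \<and> (\<forall>C > 0. measure M {\<omega> \<in> space M. star_disc d N (word_to_points p d (U \<omega>)) \<ge> C * sqrt (real d / real N)}
                 \<le> measure M {\<omega> \<in> space M. star_disc d N \<omega> \<ge> C * sqrt (real d / real N) - real d / 2 ^ p})"
proof (intro conjI allI impI)
  show "AE \<omega> in M. \<forall>k<N. \<forall>i<d. word_to_points p d (U \<omega>) k i = trunc_p p (\<omega> k i)"
    using AE_good[where d=d and N=N] unfolding M_def U_def
    by (rule eventually_mono) (auto intro: wtp)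
  have disc: "AE \<omega> in M. \<bar>star_disc d N \<omega> - star_disc d N (word_to_points p d (U \<omega>))\<bar> \<le> real d / 2 ^ p"
    using AE_good[where d=d and N=N] unfolding M_def U_def
  proof (rule eventually_mono)
    fix \<omega> :: "nat \<Rightarrow> nat \<Rightarrow> real" assume g: "\<forall>k<N. \<forall>i<d. 0 \<le> \<omega> k i \<and> \<omega> k i < 1"
    have "\<bar>star_disc d N \<omega> - star_disc d N (word_to_points p d (word_of_points p d N \<omega>))\<bar> \<le> real d * (1 / 2^p)"
    proof (rule disc_perturb[OF assms(2)])
      show "(0::real) < 1 / 2^p" by simp
      fix k i assume k: "k < N" and i: "i < d"
      show "0 \<le> word_to_points p d (word_of_points p d N \<omega>) k i \<and>
            word_to_points p d (word_of_points p d N \<omega>) k i \<le> \<omega> k i \<and>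
            \<omega> k i < word_to_points p d (word_of_points p d N \<omega>) k i + 1 / 2 ^ p \<and> \<omega> k i < 1"
        using g k i wtp[of \<omega> k i N d p] trunc_bounds[of "\<omega> k i" p] by auto
    qed
    then show "\<bar>star_disc d N \<omega> - star_disc d N (word_to_points p d (word_of_points p d N \<omega>))\<bar> \<le> real d / 2 ^ p"
      by simp
  qed
  show "AE \<omega> in M. \<bar>star_disc d N \<omega> - star_disc d N (word_to_points p d (U \<omega>))\<bar> \<le> real d / 2 ^ p"
    by (rule disc)
  show "distr M (uniform_count_measure {w :: bool list. length w = m}) U
           = uniform_count_measure {w :: bool list. length w = m}"
  proof (rule measure_eqI_finite[OF _ sets_uniform_count_measure finite_S])
    show "sets (distr M (uniform_count_measure {w :: bool list. length w = m}) U) = Pow {w. length w = m}"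
      by (simp add: sets_uniform_count_measure)
    have pre: "\<exists>c\<in>Pset p d N. a = Wd p d N c" if "a \<in> {w :: bool list. length w = m}" for a
      using that Wd_image[of p d N] unfolding m_def by (metis imageE)
    have "U \<in> measurable M (count_space {w :: bool list. length w = m})"
      unfolding measurable_count_space_eq2[OF finite_S]
    proof (intro conjI ballI)
      show "U \<in> space M \<rightarrow> {w. length w = m}" unfolding U_def m_def by (auto simp: U_Wd length_Wd)
      fix a :: "bool list" assume "a \<in> {w. length w = m}"
      then obtain c where "c \<in> Pset p d N" "a = Wd p d N c" using pre by blast
      then show "U -` {a} \<inter> space M \<in> sets M" unfolding U_def M_def by (simp add: pre_sets)
    qed
    then have Um: "U \<in> measurable M (uniform_count_measure {w :: bool list. length w = m})"
      by (simp add: measurable_cong_sets[OF refl sets_uniform_count_measure_count_space])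
    fix a assume a: "a \<in> {w :: bool list. length w = m}"
    then obtain c where c: "c \<in> Pset p d N" "a = Wd p d N c" using pre by blast
    have "emeasure (distr M (uniform_count_measure {w :: bool list. length w = m}) U) {a}
        = emeasure M (U -` {a} \<inter> space M)"
      by (rule emeasure_distr[OF Um]) (use a in \<open>simp add: sets_uniform_count_measure\<close>)
    also have "\<dots> = ennreal (1 / 2^m)"
      unfolding U_def M_def m_def c(2) by (rule pre_measure[OF c(1)])
    also have "\<dots> = emeasure (uniform_count_measure {w :: bool list. length w = m}) {a}"
      using a by (simp add: emeasure_uniform_count_measure[OF finite_S] card_S
          divide_ennreal[symmetric] ennreal_power)
    finally show "emeasure (distr M (uniform_count_measure {w :: bool list. length w = m}) U) {a}
        = emeasure (uniform_count_measure {w :: bool list. length w = m}) {a}" .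
  qed
  fix C :: real assume "C > 0"
  let ?c = "C * sqrt (real d / real N)"
  interpret prob_space M unfolding M_def by (rule M_prob)
  have Bs: "{\<omega> \<in> space M. star_disc d N \<omega> \<ge> ?c - real d / 2 ^ p} \<in> sets M"
    using sd_meas[OF assms(2), of d] unfolding M_def by measurable
  show "measure M {\<omega> \<in> space M. star_disc d N (word_to_points p d (U \<omega>)) \<ge> ?c}
                 \<le> measure M {\<omega> \<in> space M. star_disc d N \<omega> \<ge> ?c - real d / 2 ^ p}"
  proof (rule finite_measure_mono_AE[OF _ Bs])
    show "AE x in M. x \<in> {\<omega> \<in> space M. ?c \<le> star_disc d N (word_to_points p d (U \<omega>))} \<longrightarrow>
                     x \<in> {\<omega> \<in> space M. ?c - real d / 2 ^ p \<le> star_disc d N \<omega>}"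
      using disc by (rule eventually_mono) auto
  qed
qed


end
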